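(* Let $f:X_1\to X_2$ be an L-morphism between L-spaces. (1) If $f$ is proper and $X_1$ is an algebraic L-space, then $f$ is coherent. (2) If $f$ is coherent and $X_2$ is an algebraic L-space, then $f$ is proper. (3) If $X_1$ and $X_2$ are algebraic L-spaces, then $f$ is coherent if and only if $f$ is proper.
   Context: A Priestley space is a Stone space $X$ with a partial order such that clopen upsets separate points. An L-space is a Priestley space in which the downset of each clopen set is clopen and the closure of each open upset is open. ${\sf ClopUp}(X)$ is the set of clopen upsets; $\mathrm{cl}$ denotes closure. An L-morphism is a continuous order-preserving map $f:X\to X'$ between L-spaces with $f^{-1}(\mathrm{cl}\,U)=\mathrm{cl}\,f^{-1}(U)$ for every open upset $U$ of $X'$. The spatial part of $X$ is $Y=\{y\in X\mid{\downarrow}y\text{ clopen}\}$. A Scott upset is a closed upset $F$ with $\min F\subseteq Y$; ${\sf ClopSUp}(X)$ is the set of clopen Scott upsets. For $U,V\in{\sf ClopUp}(X)$, $V\ll U$ means that for every open upset $W$, $U\subseteq\mathrm{cl}\,W$ implies $V\subseteq W$; $\ker U=\bigcup\{V\in{\sf ClopUp}(X)\mid V\ll U\}$; $\mathrm{core}\,U=\bigcup\{V\in{\sf ClopSUp}(X)\mid V\subseteq U\}$. $X$ is an algebraic L-space if $\mathrm{core}\,U$ is dense in $U$ for each $U\in{\sf ClopUp}(X)$. An L-morphism $f:X_1\to X_2$ is proper if $f^{-1}(\ker U)\subseteq\ker f^{-1}(U)$ for all $U\in{\sf ClopUp}(X_2)$, and coherent if $f^{-1}(\mathrm{core}\,U)\subseteq\mathrm{core}\,f^{-1}(U)$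 for all $U\in{\sf ClopUp}(X_2)$. *)

theory Defs
  imports "HOL-Analysis.Analysis"
begin

text \<open>An ordered topological space is given by a topology T (carrier = topspace T)
  together with a relation le, regarded only on the carrier.\<close>

definition clopen_in :: "'a topology \<Rightarrow> 'a set \<Rightarrow> bool" where
  "clopen_in T U \<longleftrightarrow> openin T U \<and> closedin T U"

definition stone_space :: "'a topology \<Rightarrow> bool" where
  "stone_space T \<longleftrightarrow> compact_space T \<and> Hausdorff_space T \<and>
     (\<forall>U x. openin T U \<and> x \<in> U \<longrightarrow> (\<exists>C. clopen_in T C \<and> x \<in> C \<and> C \<subseteq> U))"

definition partial_order_carrier :: "'a set \<Rightarrow> ('a \<Rightarrow> 'a \<Rightarrow> bool) \<Rightarrow> bool" where
  "partial_order_carrier A le \<longleftrightarrow>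
     (\<forall>x\<in>A. le x x) \<and>
     (\<forall>x\<in>A. \<forall>y\<in>A. le x y \<and> le y x \<longrightarrow> x = y) \<and>
     (\<forall>x\<in>A. \<forall>y\<in>A. \<forall>z\<in>A. le x y \<and> le y z \<longrightarrow> le x z)"

definition upset_in :: "'a topology \<Rightarrow> ('a \<Rightarrow> 'a \<Rightarrow> bool) \<Rightarrow> 'a set \<Rightarrow> bool" where
  "upset_in T le U \<longleftrightarrow> U \<subseteq> topspace T \<and> (\<forall>x\<in>U. \<forall>y\<in>topspace T. le x y \<longrightarrow> y \<in> U)"

definition downset_of :: "'a topology \<Rightarrow> ('a \<Rightarrow> 'a \<Rightarrow> bool) \<Rightarrow> 'a set \<Rightarrow> 'a set" where
  "downset_of T le S = {y \<in> topspace T. \<exists>x\<in>S. le y x}"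

definition priestley_space :: "'a topology \<Rightarrow> ('a \<Rightarrow> 'a \<Rightarrow> bool) \<Rightarrow> bool" where
  "priestley_space T le \<longleftrightarrow> stone_space T \<and> partial_order_carrier (topspace T) le \<and>
     (\<forall>x\<in>topspace T. \<forall>y\<in>topspace T. \<not> le x y \<longrightarrow>
        (\<exists>U. clopen_in T U \<and> upset_in T le U \<and> x \<in> U \<and> y \<notin> U))"

definition L_space :: "'a topology \<Rightarrow> ('a \<Rightarrow> 'a \<Rightarrow> bool) \<Rightarrow> bool" where
  "L_space T le \<longleftrightarrow> priestley_space T le \<and>
     (\<forall>U. clopen_in T U \<longrightarrow> clopen_in T (downset_of T le U)) \<and>
     (\<forall>U. openin T U \<and> upset_in T le U \<longrightarrow> openin T (T closure_of U))"

definition ClopUp :: "'a topology \<Rightarrow> ('a \<Rightarrow> 'a \<Rightarrow> bool) \<Rightarrow> 'a set set" where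
  "ClopUp T le = {U. clopen_in T U \<and> upset_in T le U}"

definition preim :: "'a topology \<Rightarrow> ('a \<Rightarrow> 'b) \<Rightarrow> 'b set \<Rightarrow> 'a set" where
  "preim T f A = {x \<in> topspace T. f x \<in> A}"

definition L_morphism :: "'a topology \<Rightarrow> ('a \<Rightarrow> 'a \<Rightarrow> bool) \<Rightarrow>
    'b topology \<Rightarrow> ('b \<Rightarrow> 'b \<Rightarrow> bool) \<Rightarrow> ('a \<Rightarrow> 'b) \<Rightarrow> bool" where
  "L_morphism T1 le1 T2 le2 f \<longleftrightarrow> continuous_map T1 T2 f \<and>
     (\<forall>x\<in>topspace T1. \<forall>y\<in>topspace T1. le1 x y \<longrightarrow> le2 (f x) (f y)) \<and>
     (\<forall>U. openin T2 U \<and> upset_in T2 le2 U \<longrightarrow>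
        preim T1 f (T2 closure_of U) = T1 closure_of (preim T1 f U))"

definition spatial_part :: "'a topology \<Rightarrow> ('a \<Rightarrow> 'a \<Rightarrow> bool) \<Rightarrow> 'a set" where
  "spatial_part T le = {y \<in> topspace T. clopen_in T (downset_of T le {y})}"

definition min_elems :: "('a \<Rightarrow> 'a \<Rightarrow> bool) \<Rightarrow> 'a set \<Rightarrow> 'a set" where
  "min_elems le F = {x \<in> F. \<forall>y\<in>F. le y x \<longrightarrow> y = x}"

definition scott_upset :: "'a topology \<Rightarrow> ('a \<Rightarrow> 'a \<Rightarrow> bool) \<Rightarrow> 'a set \<Rightarrow> bool" where
  "scott_upset T le F \<longleftrightarrow> closedin T F \<and> upset_in T le F \<and>
     min_elems le F \<subseteq> spatial_part T le"

definition ClopSUp :: "'a topology \<Rightarrow> ('a \<Rightarrow> 'a \<Rightarrow> bool) \<Rightarrow> 'a set set" where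
  "ClopSUp T le = {U. clopen_in T U \<and> scott_upset T le U}"

definition way_below :: "'a topology \<Rightarrow> ('a \<Rightarrow> 'a \<Rightarrow> bool) \<Rightarrow> 'a set \<Rightarrow> 'a set \<Rightarrow> bool" where
  "way_below T le V U \<longleftrightarrow>
     (\<forall>W. openin T W \<and> upset_in T le W \<and> U \<subseteq> T closure_of W \<longrightarrow> V \<subseteq> W)"

definition ker_of :: "'a topology \<Rightarrow> ('a \<Rightarrow> 'a \<Rightarrow> bool) \<Rightarrow> 'a set \<Rightarrow> 'a set" where
  "ker_of T le U = \<Union>{V \<in> ClopUp T le. way_below T le V U}"

definition core_of :: "'a topology \<Rightarrow> ('a \<Rightarrow> 'a \<Rightarrow> bool) \<Rightarrow> 'a set \<Rightarrow> 'a set" where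
  "core_of T le U = \<Union>{V \<in> ClopSUp T le. V \<subseteq> U}"

text \<open>core U dense in U: U is contained in the closure of core U (core U \<subseteq> U always).\<close>
definition algebraic_L_space :: "'a topology \<Rightarrow> ('a \<Rightarrow> 'a \<Rightarrow> bool) \<Rightarrow> bool" where
  "algebraic_L_space T le \<longleftrightarrow> L_space T le \<and>
     (\<forall>U\<in>ClopUp T le. U \<subseteq> T closure_of (core_of T le U))"

definition proper_morphism :: "'a topology \<Rightarrow> ('a \<Rightarrow> 'a \<Rightarrow> bool) \<Rightarrow>
    'b topology \<Rightarrow> ('b \<Rightarrow> 'b \<Rightarrow> bool) \<Rightarrow> ('a \<Rightarrow> 'b) \<Rightarrow> bool" where
  "proper_morphism T1 le1 T2 le2 f \<longleftrightarrow>
     (\<forall>U\<in>ClopUp T2 le2. preim T1 f (ker_of T2 le2 U) \<subseteq> ker_of T1 le1 (preim T1 f U))"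

definition coherent_morphism :: "'a topology \<Rightarrow> ('a \<Rightarrow> 'a \<Rightarrow> bool) \<Rightarrow>
    'b topology \<Rightarrow> ('b \<Rightarrow> 'b \<Rightarrow> bool) \<Rightarrow> ('a \<Rightarrow> 'b) \<Rightarrow> bool" where
  "coherent_morphism T1 le1 T2 le2 f \<longleftrightarrow>
     (\<forall>U\<in>ClopUp T2 le2. preim T1 f (core_of T2 le2 U) \<subseteq> core_of T1 le1 (preim T1 f U))"

end

theory Submission
  imports Defs
begin

lemma down_closed:
  assumes P: "priestley_space T le" and y: "y \<in> topspace T"
  shows "closedin T {z \<in> topspace T. le z y}"
proof -
  have "openin T (topspace T - {z \<in> topspace T. le z y})"
  proof (subst openin_subopen, intro ballI)
    fix z assume z: "z \<in> topspace T - {z \<in> topspace T. le z y}"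
    then obtain U where U: "clopen_in T U" "upset_in T le U" "z \<in> U" "y \<notin> U"
      using P y unfolding priestley_space_def by blast
    have "U \<subseteq> topspace T - {z \<in> topspace T. le z y}"
      using U y unfolding upset_in_def by blast
    then show "\<exists>T'. openin T T' \<and> z \<in> T' \<and> T' \<subseteq> topspace T - {z \<in> topspace T. le z y}"
      using U unfolding clopen_in_def by blast
  qed
  then show ?thesis unfolding closedin_def by blast
qed

lemma min_below:
  assumes P: "priestley_space T le" and V: "closedin T V" and x: "x \<in> V"
  shows "\<exists>m\<in>min_elems le V. le m x"
proof -
  have VT: "V \<subseteq> topspace T" using V closedin_subset by blast
  have po: "partial_order_carrier (topspace T) le" using P unfolding priestley_space_def by blast
  have refl: "\<And>a. a \<in> topspace T \<Longrightarrow> le a a" using po unfolding partial_order_carrier_def by blast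
  have antis: "\<And>a b. a \<in> topspace T \<Longrightarrow> b \<in> topspace T \<Longrightarrow> le a b \<Longrightarrow> le b a \<Longrightarrow> a = b"
    using po unfolding partial_order_carrier_def by blast
  have trans: "\<And>a b c. a \<in> topspace T \<Longrightarrow> b \<in> topspace T \<Longrightarrow> c \<in> topspace T \<Longrightarrow> le a b \<Longrightarrow> le b c \<Longrightarrow> le a c"
  proof -
    fix a b c assume "a \<in> topspace T" "b \<in> topspace T" "c \<in> topspace T" "le a b" "le b c"
    moreover have "\<forall>x\<in>topspace T. \<forall>y\<in>topspace T. \<forall>z\<in>topspace T. le x y \<and> le y z \<longrightarrow> le x z"
      using po unfolding partial_order_carrier_def by (elim conjE)
    ultimately show "le a c" by blast
  qed
  have cs: "compact_space T" using P unfolding priestley_space_def stone_space_def by blast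
  define S where "S = {z \<in> V. le z x}"
  define up where "up y = {z \<in> S. le y z}" for y
  define D where "D y = {z \<in> V. le z y}" for y
  define A where "A = up ` S"
  have xS: "x \<in> S" using x VT refl S_def by auto
  have upself: "y \<in> up y" if "y \<in> S" for y using that VT refl unfolding up_def S_def by auto
  have "\<exists>M\<in>A. \<forall>X\<in>A. M \<subseteq> X \<longrightarrow> X = M"
  proof (rule Zorn_Lemma2, intro ballI)
    fix C assume C: "C \<in> chains A"
    show "\<exists>U\<in>A. \<forall>X\<in>C. X \<subseteq> U"
    proof (cases "C = {}")
      case True then show ?thesis using xS A_def by blast
    next
      case False
      have CA: "C \<subseteq> A" and Cch: "\<And>X Y. X \<in> C \<Longrightarrow> Y \<in> C \<Longrightarrow> X \<subseteq> Y \<or> Y \<subseteq> X"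
        using C unfolding chains_def chain_subset_def by blast+
      define Y where "Y = {y \<in> S. up y \<in> C}"
      have Ycomp: "le a b \<or> le b a" if "a \<in> Y" "b \<in> Y" for a b
      proof -
        have "up a \<subseteq> up b \<or> up b \<subseteq> up a" using Cch that Y_def by blast
        then show ?thesis using upself that Y_def unfolding up_def by blast
      qed
      have YS: "Y \<subseteq> S" using Y_def by blast
      have Yne: "Y \<noteq> {}" using False CA A_def Y_def by blast
      have least: "\<exists>y0\<in>Y'. \<forall>y\<in>Y'. le y0 y" if "finite Y'" "Y' \<noteq> {}" "Y' \<subseteq> Y" for Y'
        using that
      proof (induction Y' rule: finite_ne_induct)
        case (singleton a) then show ?case using refl YS S_def VT by blast
      next
        case (insert a F)
        then obtain y0 where y0: "y0 \<in> F" "\<forall>y\<in>F. le y0 y" by blast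
        have inT: "\<And>z. z \<in> Y \<Longrightarrow> z \<in> topspace T" using YS S_def VT by blast
        have aY: "a \<in> Y" "y0 \<in> Y" using insert y0 by blast+
        show ?case
        proof (cases "le y0 a")
          case True then show ?thesis using y0 by blast
        next
          case False
          then have "le a y0" using Ycomp aY by blast
          have "\<forall>y\<in>insert a F. le a y"
          proof
            fix y assume yin: "y \<in> insert a F"
            show "le a y"
            proof (cases "y = a")
              case True then show ?thesis using refl inT aY by simp
            next
              case False
              then have yF: "y \<in> F" using yin by blast
              then have "y \<in> Y" using insert.prems by blast
              then show ?thesis using trans[OF inT[OF aY(1)] inT[OF aY(2)] inT] \<open>le a y0\<close> y0(2) yF by blast
            qed
          qed
          then show ?thesis by blast
        qed
      qed
      define U where "U = D ` Y"
      have Ucl: "\<forall>c\<in>U. closedin T c"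
      proof
        fix c assume "c \<in> U"
        then obtain y where y: "y \<in> Y" "c = D y" using U_def by blast
        have "y \<in> topspace T" using y YS S_def VT by blast
        then have "closedin T (V \<inter> {z \<in> topspace T. le z y})"
          using down_closed[OF P] V by blast
        moreover have "V \<inter> {z \<in> topspace T. le z y} = c" using y D_def VT by blast
        ultimately show "closedin T c" by simp
      qed
      have Ufip: "\<forall>F. finite F \<and> F \<subseteq> U \<longrightarrow> \<Inter>F \<noteq> {}"
      proof (intro allI impI)
        fix F assume F: "finite F \<and> F \<subseteq> U"
        show "\<Inter>F \<noteq> {}"
        proof (cases "F = {}")
          case True then show ?thesis by simp
        next
          case False
          obtain Y' where Y': "Y' \<subseteq> Y" "finite Y'" "F = D ` Y'"
            using F U_def by (meson finite_subset_image)
          then have "Y' \<noteq> {}" using False by blast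
          then obtain y0 where "y0 \<in> Y'" "\<forall>y\<in>Y'. le y0 y" using least Y' by blast
          then have "y0 \<in> \<Inter>F" using Y' YS S_def D_def by blast
          then show ?thesis by blast
        qed
      qed
      have "\<Inter>U \<noteq> {}" using cs Ucl Ufip unfolding compact_space_fip by blast
      then obtain m where m: "m \<in> \<Inter>U" by blast
      obtain y1 where y1: "y1 \<in> Y" using Yne by blast
      have mV: "m \<in> V" and my: "\<And>y. y \<in> Y \<Longrightarrow> le m y" using m U_def D_def y1 by blast+
      have y1S: "y1 \<in> S" using y1 YS by blast
      have mx: "le m x"
        by (rule trans[of m y1 x]) (use mV VT my y1 y1S x in \<open>auto simp: S_def\<close>)
      have mS: "m \<in> S" using mV mx S_def by blast
      have "\<forall>X\<in>C. X \<subseteq> up m"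
      proof
        fix X assume "X \<in> C"
        then obtain y where y: "y \<in> S" "X = up y" using CA A_def by blast
        then have yY: "y \<in> Y" using \<open>X \<in> C\<close> Y_def by blast
        show "X \<subseteq> up m"
        proof
          fix z assume "z \<in> X"
          then have z: "z \<in> S" "le y z" using y(2) up_def by auto
          have "le m z"
            by (rule trans[of m y z]) (use mV VT my[OF yY] y(1) z in \<open>auto simp: S_def\<close>)
          then show "z \<in> up m" using z up_def by simp
        qed
      qed
      then show ?thesis using mS A_def by blast
    qed
  qed
  then obtain m where mS: "m \<in> S" and mmax: "\<forall>X\<in>A. up m \<subseteq> X \<longrightarrow> X = up m"
    using A_def by blast
  have "m \<in> min_elems le V"
    unfolding min_elems_def
  proof (intro CollectI conjI ballI impI)
    show "m \<in> V" using mS S_def by blast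
    fix y assume y: "y \<in> V" "le y m"
    have mS': "m \<in> V" "le m x" using mS S_def by auto
    have "le y x" by (rule trans[of y m x]) (use y VT mS' x in auto)
    then have yS: "y \<in> S" using y S_def by simp
    have "up m \<subseteq> up y"
    proof
      fix z assume "z \<in> up m"
      then have z: "z \<in> S" "le m z" using up_def by auto
      have "le y z" by (rule trans[of y m z]) (use y VT mS' z in \<open>auto simp: S_def\<close>)
      then show "z \<in> up y" using z up_def by simp
    qed
    then have "up y = up m" using mmax yS A_def by blast
    then have "le m y" using upself[OF yS] up_def by blast
    then show "y = m" using antis y VT mS S_def by blast
  qed
  then show ?thesis using mS S_def by blast
qed


lemma preim_ClopUp:
  assumes M: "L_morphism T1 le1 T2 le2 f" and U: "U \<in> ClopUp T2 le2"
  shows "preim T1 f U \<in> ClopUp T1 le1"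
proof -
  have c: "continuous_map T1 T2 f" and mo: "\<forall>x\<in>topspace T1. \<forall>y\<in>topspace T1. le1 x y \<longrightarrow> le2 (f x) (f y)"
    using M unfolding L_morphism_def by blast+
  have Uc: "openin T2 U" "closedin T2 U" "upset_in T2 le2 U"
    using U unfolding ClopUp_def clopen_in_def by auto
  have "openin T1 (preim T1 f U)"
    unfolding preim_def by (rule openin_continuous_map_preimage[OF c Uc(1)])
  moreover have "closedin T1 (preim T1 f U)"
    unfolding preim_def by (rule closedin_continuous_map_preimage[OF c Uc(2)])
  moreover have "upset_in T1 le1 (preim T1 f U)"
    unfolding upset_in_def preim_def
  proof (intro conjI ballI impI)
    fix x y assume x: "x \<in> {x \<in> topspace T1. f x \<in> U}" and y: "y \<in> topspace T1" and "le1 x y"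
    then have "le2 (f x) (f y)" using mo by blast
    moreover have "f y \<in> topspace T2" using c y by (meson continuous_map_image_subset_topspace image_subset_iff)
    ultimately show "y \<in> {x \<in> topspace T1. f x \<in> U}"
      using Uc(3) x y unfolding upset_in_def by blast
  qed auto
  ultimately show ?thesis unfolding ClopUp_def clopen_in_def by blast
qed

lemma preim_mono: "A \<subseteq> B \<Longrightarrow> preim T f A \<subseteq> preim T f B"
  unfolding preim_def by blast

lemma core_sub_ker:
  assumes P: "priestley_space T le"
  shows "core_of T le U \<subseteq> ker_of T le U"
proof
  fix x assume "x \<in> core_of T le U"
  then obtain V where V: "V \<in> ClopSUp T le" "V \<subseteq> U" "x \<in> V" unfolding core_of_def by blast
  have po: "partial_order_carrier (topspace T) le" using P unfolding priestley_space_def by blast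
  have refl: "\<And>a. a \<in> topspace T \<Longrightarrow> le a a" using po unfolding partial_order_carrier_def by blast
  have VC: "V \<in> ClopUp T le" using V unfolding ClopSUp_def ClopUp_def scott_upset_def by blast
  have "way_below T le V U"
    unfolding way_below_def
  proof (intro allI impI subsetI)
    fix W z assume W: "openin T W \<and> upset_in T le W \<and> U \<subseteq> T closure_of W" and z: "z \<in> V"
    have Vcl: "closedin T V" using V unfolding ClopSUp_def clopen_in_def by blast
    obtain m where m: "m \<in> min_elems le V" "le m z" using min_below[OF P Vcl z] by blast
    have mY: "m \<in> spatial_part T le" using m V unfolding ClopSUp_def scott_upset_def by blast
    then have mT: "m \<in> topspace T" and op: "openin T (downset_of T le {m})"
      unfolding spatial_part_def clopen_in_def by blast+
    have mD: "m \<in> downset_of T le {m}" using mT refl unfolding downset_of_def by blast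
    have "m \<in> T closure_of W" using m V W unfolding min_elems_def by blast
    then obtain w where w: "w \<in> W" "w \<in> downset_of T le {m}"
      using op mD unfolding in_closure_of by blast
    then have "le w m" unfolding downset_of_def by blast
    then have "m \<in> W" using W w mT unfolding upset_in_def by blast
    moreover have "z \<in> topspace T" using z Vcl closedin_subset by blast
    ultimately show "z \<in> W" using W m unfolding upset_in_def by blast
  qed
  then show "x \<in> ker_of T le U" using VC V unfolding ker_of_def by blast
qed

lemma ker_sub_core:
  assumes A: "algebraic_L_space T le" and U: "U \<in> ClopUp T le"
  shows "ker_of T le U \<subseteq> core_of T le U"
proof
  fix x assume "x \<in> ker_of T le U"
  then obtain V where V: "V \<in> ClopUp T le" "way_below T le V U" "x \<in> V" unfolding ker_of_def by blast
  have "openin T (core_of T le U)"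
    unfolding core_of_def by (rule openin_Union) (auto simp: ClopSUp_def clopen_in_def)
  moreover have "upset_in T le (core_of T le U)"
    unfolding core_of_def upset_in_def
  proof (intro conjI ballI impI)
    show "\<Union>{V \<in> ClopSUp T le. V \<subseteq> U} \<subseteq> topspace T"
      unfolding ClopSUp_def scott_upset_def upset_in_def by blast
  next
    fix a b assume a: "a \<in> \<Union>{V \<in> ClopSUp T le. V \<subseteq> U}" and b: "b \<in> topspace T" and ab: "le a b"
    from a obtain V where V: "V \<in> ClopSUp T le" "V \<subseteq> U" "a \<in> V" by blast
    then have "upset_in T le V" unfolding ClopSUp_def scott_upset_def by blast
    then have "b \<in> V" using V b ab unfolding upset_in_def by blast
    then show "b \<in> \<Union>{V \<in> ClopSUp T le. V \<subseteq> U}" using V by blast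
  qed
  moreover have "U \<subseteq> T closure_of (core_of T le U)" using A U unfolding algebraic_L_space_def by blast
  ultimately have "V \<subseteq> core_of T le U" using V unfolding way_below_def by blast
  then show "x \<in> core_of T le U" using V by blast
qed

theorem lemma4p7:
  fixes T1 :: "'a topology" and le1 :: "'a \<Rightarrow> 'a \<Rightarrow> bool"
    and T2 :: "'b topology" and le2 :: "'b \<Rightarrow> 'b \<Rightarrow> bool"
    and f :: "'a \<Rightarrow> 'b"
  assumes "L_space T1 le1" and "L_space T2 le2"
    and "L_morphism T1 le1 T2 le2 f"
  shows "(proper_morphism T1 le1 T2 le2 f \<and> algebraic_L_space T1 le1
            \<longrightarrow> coherent_morphism T1 le1 T2 le2 f)
       \<and> (coherent_morphism T1 le1 T2 le2 f \<and> algebraic_L_space T2 le2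
            \<longrightarrow> proper_morphism T1 le1 T2 le2 f)
       \<and> (algebraic_L_space T1 le1 \<and> algebraic_L_space T2 le2
            \<longrightarrow> (coherent_morphism T1 le1 T2 le2 f \<longleftrightarrow> proper_morphism T1 le1 T2 le2 f))"
proof -
  have P1: "priestley_space T1 le1" and P2: "priestley_space T2 le2"
    using assms unfolding L_space_def by blast+
  have I: "coherent_morphism T1 le1 T2 le2 f"
    if pr: "proper_morphism T1 le1 T2 le2 f" and A1: "algebraic_L_space T1 le1"
    unfolding coherent_morphism_def
  proof
    fix U assume U: "U \<in> ClopUp T2 le2"
    have "preim T1 f (core_of T2 le2 U) \<subseteq> preim T1 f (ker_of T2 le2 U)"
      by (rule preim_mono[OF core_sub_ker[OF P2]])
    also have "\<dots> \<subseteq> ker_of T1 le1 (preim T1 f U)" using pr U unfolding proper_morphism_def by blast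
    also have "\<dots> \<subseteq> core_of T1 le1 (preim T1 f U)"
      by (rule ker_sub_core[OF A1 preim_ClopUp[OF assms(3) U]])
    finally show "preim T1 f (core_of T2 le2 U) \<subseteq> core_of T1 le1 (preim T1 f U)" .
  qed
  have II: "proper_morphism T1 le1 T2 le2 f"
    if co: "coherent_morphism T1 le1 T2 le2 f" and A2: "algebraic_L_space T2 le2"
    unfolding proper_morphism_def
  proof
    fix U assume U: "U \<in> ClopUp T2 le2"
    have "preim T1 f (ker_of T2 le2 U) \<subseteq> preim T1 f (core_of T2 le2 U)"
      by (rule preim_mono[OF ker_sub_core[OF A2 U]])
    also have "\<dots> \<subseteq> core_of T1 le1 (preim T1 f U)" using co U unfolding coherent_morphism_def by blast
    also have "\<dots> \<subseteq> ker_of T1 le1 (preim T1 f U)" by (rule core_sub_ker[OF P1])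
    finally show "preim T1 f (ker_of T2 le2 U) \<subseteq> ker_of T1 le1 (preim T1 f U)" .
  qed
  show ?thesis using I II by blast
qed

end
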